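(* Let $m\in\mathbb{Z}_{>0}\cup\{\infty\}$ and $n\ge 1$. Let $\tilde W$ be the subalgebra of $H(m,1,n)$ generated by $\tau,\tau^{-1},\sigma_1,\dots,\sigma_{n-2}$. Then every $x\in H(m,1,n)$ is an $\mathcal{A}_m$-linear combination of elements of the form $$\sigma_j^{-1}\sigma_{j-1}^{-1}\cdots\sigma_1^{-1}\,\tau^{\alpha}\,\sigma_1\sigma_2\cdots\sigma_{n-1}\,w,\qquad j\in\{0,\dots,n-1\},\ \alpha\in\mathfrak{E}_m,\ w\in\tilde W$$ (empty products equal $1$).
   Context: $q,v_1,\dots,v_m$ are indeterminates; $\mathcal{A}_m:=\mathbb{C}[q^{\pm1},v_1^{\pm1},\dots,v_m^{\pm1}]$ for finite $m$ and $\mathcal{A}_\infty:=\mathbb{C}[q,q^{-1}]$. $\mathfrak{E}_m:=\{0,\dots,m-1\}$ for finite $m$, $\mathfrak{E}_\infty:=\mathbb{Z}$. The algebra $H(m,1,n)$ is the associative $\mathcal{A}_m$-algebra generated by $\tau,\tau^{-1},\sigma_1,\dots,\sigma_{n-1}$ (with $\tau\tau^{-1}=\tau^{-1}\tau=1$) subject to: $\sigma_i\sigma_{i+1}\sigma_i=\sigma_{i+1}\sigma_i\sigma_{i+1}$ ($1\le i\le n-2$); $\sigma_i\sigma_j=\sigma_j\sigma_i$ for $|i-j|>1$; $\tau\sigma_1\tau\sigma_1=\sigma_1\tau\sigma_1\tau$; $\tau\sigma_i=\sigma_i\tau$ for $i>1$; $\sigma_i^2=(q-q^{-1})\sigma_i+1$;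 and, if $m<\infty$, $(\tau-v_1)\cdots(\tau-v_m)=0$. (For $m=\infty$ this is the affine Hecke algebra of type GL.) *)

theory Defs
  imports "HOL-Library.Poly_Mapping" "HOL-Library.Extended_Nat"
begin

text \<open>Laurent polynomials over the complex numbers in the countably many indeterminates
  x_0, x_1, x_2, ...: a polynomial is a finitely supported map from exponent vectors
  (finitely supported nat to int maps) to coefficients.  We use x_0 = q and x_i = v_i.\<close>

type_synonym laurent = "(nat \<Rightarrow>\<^sub>0 int) \<Rightarrow>\<^sub>0 complex"

definition lvar :: "nat \<Rightarrow> laurent" where
  "lvar i = Poly_Mapping.single (Poly_Mapping.single i 1) 1"

definition lvar_inv :: "nat \<Rightarrow> laurent" where
  "lvar_inv i = Poly_Mapping.single (Poly_Mapping.single i (-1)) 1"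

abbreviation qq :: laurent where "qq \<equiv> lvar 0"
abbreviation qq_inv :: laurent where "qq_inv \<equiv> lvar_inv 0"

text \<open>The coefficient ring A_m: Laurent polynomials in q, v_1..v_m (m finite) or in q only
  (m = infinity).\<close>

definition coeffA :: "enat \<Rightarrow> laurent set" where
  "coeffA m = {p :: laurent. \<forall>\<mu> \<in> Poly_Mapping.keys p. \<forall>i \<in> Poly_Mapping.keys \<mu>. i = 0 \<or> (m \<noteq> \<infinity> \<and> enat i \<le> m)}"

definition expE :: "enat \<Rightarrow> int set" where
  "expE m = (if m = \<infinity> then UNIV else {0..<int (the_enat m)})"

text \<open>Two-sided inverse in a ring (meaningful when it exists and is unique).\<close>

definition ring_inv :: "'r::ring_1 \<Rightarrow> 'r" where
  "ring_inv x = (THE y. x * y = 1 \<and> y * x = 1)"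

definition zpow :: "'r::ring_1 \<Rightarrow> 'r \<Rightarrow> int \<Rightarrow> 'r" where
  "zpow t ti a = (if a \<ge> 0 then t ^ nat a else ti ^ nat (- a))"

inductive_set alg_gen :: "(laurent \<Rightarrow> 'r::ring_1) \<Rightarrow> laurent set \<Rightarrow> 'r set \<Rightarrow> 'r set"
  for \<phi> :: "laurent \<Rightarrow> 'r" and A :: "laurent set" and G :: "'r set" where
  scal: "a \<in> A \<Longrightarrow> \<phi> a \<in> alg_gen \<phi> A G"
| gen: "g \<in> G \<Longrightarrow> g \<in> alg_gen \<phi> A G"
| add: "x \<in> alg_gen \<phi> A G \<Longrightarrow> y \<in> alg_gen \<phi> A G \<Longrightarrow> x + y \<in> alg_gen \<phi> A G"
| mult: "x \<in> alg_gen \<phi> A G \<Longrightarrow> y \<in> alg_gen \<phi> A G \<Longrightarrow> x * y \<in> alg_gen \<phi> A G"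

definition lin_span :: "(laurent \<Rightarrow> 'r::ring_1) \<Rightarrow> laurent set \<Rightarrow> 'r set \<Rightarrow> 'r set" where
  "lin_span \<phi> A B = {x. \<exists>(k::nat) c b. (\<forall>i<k. c i \<in> A \<and> b i \<in> B) \<and> x = (\<Sum>i<k. \<phi> (c i) * b i)}"

text \<open>The algebra H(m,1,n) itself is such an R, and every such R is a
  quotient of H(m,1,n).\<close>

definition is_H :: "enat \<Rightarrow> nat \<Rightarrow> (laurent \<Rightarrow> 'r::ring_1) \<Rightarrow> 'r \<Rightarrow> 'r \<Rightarrow> (nat \<Rightarrow> 'r) \<Rightarrow> bool" where
  "is_H m n \<phi> t ti s \<longleftrightarrow>
     (\<forall>a\<in>coeffA m. \<forall>b\<in>coeffA m. \<phi> (a + b) = \<phi> a + \<phi> b \<and> \<phi> (a * b) = \<phi> a * \<phi> b) \<and>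
     \<phi> 1 = 1 \<and>
     (\<forall>a\<in>coeffA m. \<forall>x. \<phi> a * x = x * \<phi> a) \<and>
     t * ti = 1 \<and> ti * t = 1 \<and>
     (\<forall>i. 1 \<le> i \<and> i \<le> n - 2 \<longrightarrow> s i * s (i+1) * s i = s (i+1) * s i * s (i+1)) \<and>
     (\<forall>i j. 1 \<le> i \<and> i \<le> n - 1 \<and> 1 \<le> j \<and> j \<le> n - 1 \<and> (i + 1 < j \<or> j + 1 < i)
        \<longrightarrow> s i * s j = s j * s i) \<and>
     (n \<ge> 2 \<longrightarrow> t * s 1 * t * s 1 = s 1 * t * s 1 * t) \<and>
     (\<forall>i. 2 \<le> i \<and> i \<le> n - 1 \<longrightarrow> t * s i = s i * t) \<and>
     (\<forall>i. 1 \<le> i \<and> i \<le> n - 1 \<longrightarrow> s i * s i = \<phi> (qq - qq_inv) * s i + 1) \<and>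
     (m \<noteq> \<infinity> \<longrightarrow> prod_list (map (\<lambda>i. t - \<phi> (lvar i)) [1..<the_enat m + 1]) = 0) \<and>
     alg_gen \<phi> (coeffA m) ({t, ti} \<union> s ` {1..<n}) = UNIV"

end

theory Submission
  imports Defs
begin



definition goodmon :: "enat \<Rightarrow> (nat \<Rightarrow>\<^sub>0 int) \<Rightarrow> bool" where
  "goodmon m \<mu> \<longleftrightarrow> (\<forall>i \<in> Poly_Mapping.keys \<mu>. i = 0 \<or> (m \<noteq> \<infinity> \<and> enat i \<le> m))"

lemma coeffA_iff: "p \<in> coeffA m \<longleftrightarrow> (\<forall>\<mu>\<in>Poly_Mapping.keys p. goodmon m \<mu>)"
  by (simp add: coeffA_def goodmon_def)

lemma goodmon_add: "goodmon m a \<Longrightarrow> goodmon m b \<Longrightarrow> goodmon m (a + b)"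
  unfolding goodmon_def using keys_add[of a b] by blast

lemma coeffA_add: "p \<in> coeffA m \<Longrightarrow> q \<in> coeffA m \<Longrightarrow> p + q \<in> coeffA m"
  unfolding coeffA_iff using keys_add[of p q] by blast

lemma coeffA_mult: "p \<in> coeffA m \<Longrightarrow> q \<in> coeffA m \<Longrightarrow> p * q \<in> coeffA m"
  unfolding coeffA_iff using keys_mult[of p q] goodmon_add by blast

lemma coeffA_uminus: "p \<in> coeffA m \<Longrightarrow> - p \<in> coeffA m"
  unfolding coeffA_iff by simp

lemma coeffA_diff: "p \<in> coeffA m \<Longrightarrow> q \<in> coeffA m \<Longrightarrow> p - q \<in> coeffA m"
  using coeffA_add[OF _ coeffA_uminus] by (metis diff_conv_add_uminus)

lemma coeffA_one: "1 \<in> coeffA m"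
  unfolding coeffA_iff goodmon_def by simp

lemma coeffA_zero: "0 \<in> coeffA m"
  unfolding coeffA_iff by simp

lemma coeffA_lvar: "i = 0 \<or> (m \<noteq> \<infinity> \<and> enat i \<le> m) \<Longrightarrow> lvar i \<in> coeffA m"
  unfolding coeffA_iff goodmon_def lvar_def by simp

lemma coeffA_lvar_inv: "i = 0 \<or> (m \<noteq> \<infinity> \<and> enat i \<le> m) \<Longrightarrow> lvar_inv i \<in> coeffA m"
  unfolding coeffA_iff goodmon_def lvar_inv_def by simp

lemma lvar_mult_inv: "lvar i * lvar_inv i = 1"
proof -
  have "Poly_Mapping.single i (1::int) + Poly_Mapping.single i (-1) = 0"
    by (simp flip: single_add)
  then show ?thesis unfolding lvar_def lvar_inv_def by (simp add: mult_single)
qed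




locale HH =
  fixes m :: enat and n :: nat and \<phi> :: "laurent \<Rightarrow> 'r::ring_1" and t ti :: 'r and s :: "nat \<Rightarrow> 'r"
  assumes H: "is_H m n \<phi> t ti s" and m0: "m > 0" and n1: "n \<ge> 1"
begin

abbreviation "A \<equiv> coeffA m"

lemma phi_add: "a \<in> A \<Longrightarrow> b \<in> A \<Longrightarrow> \<phi> (a + b) = \<phi> a + \<phi> b"
  using H unfolding is_H_def by blast
lemma phi_mult: "a \<in> A \<Longrightarrow> b \<in> A \<Longrightarrow> \<phi> (a * b) = \<phi> a * \<phi> b"
  using H unfolding is_H_def by blast
lemma phi_one: "\<phi> 1 = 1"
  using H unfolding is_H_def by blast
lemma central: "a \<in> A \<Longrightarrow> \<phi> a * x = x * \<phi> a"
  using H unfolding is_H_def by blast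
lemma tti: "t * ti = 1" "ti * t = 1"
  using H unfolding is_H_def by blast+
lemma braid: "1 \<le> i \<Longrightarrow> i \<le> n - 2 \<Longrightarrow> s i * s (i+1) * s i = s (i+1) * s i * s (i+1)"
  using H unfolding is_H_def by blast
lemma farcomm: "1 \<le> i \<Longrightarrow> i \<le> n - 1 \<Longrightarrow> 1 \<le> j \<Longrightarrow> j \<le> n - 1 \<Longrightarrow> (i + 1 < j \<or> j + 1 < i)
        \<Longrightarrow> s i * s j = s j * s i"
  using H unfolding is_H_def by blast
lemma tst: "n \<ge> 2 \<Longrightarrow> t * s 1 * t * s 1 = s 1 * t * s 1 * t"
  using H unfolding is_H_def by blast
lemma ts: "2 \<le> i \<Longrightarrow> i \<le> n - 1 \<Longrightarrow> t * s i = s i * t"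
  using H unfolding is_H_def by blast
lemma quad: "1 \<le> i \<Longrightarrow> i \<le> n - 1 \<Longrightarrow> s i * s i = \<phi> (qq - qq_inv) * s i + 1"
  using H unfolding is_H_def by blast
lemma polyrel: "m \<noteq> \<infinity> \<Longrightarrow> prod_list (map (\<lambda>i. t - \<phi> (lvar i)) [1..<the_enat m + 1]) = 0"
  using H unfolding is_H_def by blast
lemma genall: "alg_gen \<phi> A ({t, ti} \<union> s ` {1..<n}) = UNIV"
  using H unfolding is_H_def by blast

lemma phi_zero: "\<phi> 0 = 0"
  using phi_add[OF coeffA_zero coeffA_zero] by simp

lemma phi_uminus: "a \<in> A \<Longrightarrow> \<phi> (- a) = - \<phi> a"
proof -
  assume a: "a \<in> A"
  have "\<phi> (a + - a) = \<phi> a + \<phi> (- a)" using phi_add[OF a coeffA_uminus[OF a]] .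
  then show ?thesis using phi_zero by (simp add: eq_neg_iff_add_eq_0 add.commute)
qed

definition aa :: laurent where "aa = qq - qq_inv"
definition fa :: 'r where "fa = \<phi> aa"

lemma aa_A: "aa \<in> A"
  unfolding aa_def by (intro coeffA_diff coeffA_lvar coeffA_lvar_inv) simp_all

lemma fa_central: "fa * x = x * fa"
  unfolding fa_def by (rule central[OF aa_A])

lemma span_induct[consumes 1, case_names zero step]:
  assumes "x \<in> lin_span \<phi> A B" and "P 0"
    and "\<And>c b x. c \<in> A \<Longrightarrow> b \<in> B \<Longrightarrow> P x \<Longrightarrow> P (\<phi> c * b + x)"
  shows "P x"
proof -
  obtain k :: nat and c b where kb: "\<forall>i<k. c i \<in> A \<and> b i \<in> B" and x: "x = (\<Sum>i<k. \<phi> (c i) * b i)"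
    using assms(1) unfolding lin_span_def by blast
  have "\<forall>k'\<le>k. P (\<Sum>i<k'. \<phi> (c i) * b i)"
  proof (intro allI impI)
    fix k' assume "k' \<le> k" then show "P (\<Sum>i<k'. \<phi> (c i) * b i)"
    proof (induction k')
      case 0 then show ?case using assms(2) by simp
    next
      case (Suc k')
      then have "P (\<phi> (c k') * b k' + (\<Sum>i<k'. \<phi> (c i) * b i))"
        using kb assms(3) by simp
      then show ?case by (simp add: add.commute)
    qed
  qed
  then show ?thesis using x by simp
qed

lemma span_zero: "0 \<in> lin_span \<phi> A B"
  unfolding lin_span_def by (rule CollectI, rule exI[of _ 0]) simp

lemma span_step: assumes "c \<in> A" "b \<in> B" "x \<in> lin_span \<phi> A B"
  shows "\<phi> c * b + x \<in> lin_span \<phi> A B"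
proof -
  obtain k :: nat and cc bb where kb: "\<forall>i<k. cc i \<in> A \<and> bb i \<in> B" and x: "x = (\<Sum>i<k. \<phi> (cc i) * bb i)"
    using assms(3) unfolding lin_span_def by blast
  let ?c = "cc(k := c)" and ?b = "bb(k := b)"
  have "\<forall>i<Suc k. ?c i \<in> A \<and> ?b i \<in> B" using kb assms by auto
  moreover have "\<phi> c * b + x = (\<Sum>i<Suc k. \<phi> (?c i) * ?b i)"
    using x by (simp add: add.commute)
  ultimately show ?thesis unfolding lin_span_def by blast
qed

lemma span_single: "b \<in> B \<Longrightarrow> b \<in> lin_span \<phi> A B"
  using span_step[OF coeffA_one _ span_zero, of b B] by (simp add: phi_one)

lemma span_add: "x \<in> lin_span \<phi> A B \<Longrightarrow> y \<in> lin_span \<phi> A B \<Longrightarrow> x + y \<in> lin_span \<phi> A B"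
  by (induction x rule: span_induct) (auto simp: add.assoc intro: span_step)

lemma span_scal: "x \<in> lin_span \<phi> A B \<Longrightarrow> d \<in> A \<Longrightarrow> \<phi> d * x \<in> lin_span \<phi> A B"
proof (induction x rule: span_induct)
  case zero then show ?case by (simp add: span_zero)
next
  case (step c b x)
  have "\<phi> d * (\<phi> c * b + x) = \<phi> (d * c) * b + \<phi> d * x"
    using step by (simp add: phi_mult distrib_left mult.assoc)
  then show ?case using step by (auto intro!: span_step coeffA_mult)
qed

lemma span_neg: "x \<in> lin_span \<phi> A B \<Longrightarrow> - x \<in> lin_span \<phi> A B"
  using span_scal[of x B "-1"] coeffA_uminus[OF coeffA_one] phi_uminus[OF coeffA_one]
  by (simp add: phi_one)

lemma span_diff: "x \<in> lin_span \<phi> A B \<Longrightarrow> y \<in> lin_span \<phi> A B \<Longrightarrow> x - y \<in> lin_span \<phi> A B"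
  using span_add[OF _ span_neg] by (metis diff_conv_add_uminus)

lemma span_fa: "x \<in> lin_span \<phi> A B \<Longrightarrow> fa * x \<in> lin_span \<phi> A B"
  unfolding fa_def using aa_A span_scal by blast

lemma span_trans: "x \<in> lin_span \<phi> A B \<Longrightarrow> B \<subseteq> lin_span \<phi> A B' \<Longrightarrow> x \<in> lin_span \<phi> A B'"
  by (induction x rule: span_induct) (auto intro: span_add span_scal span_zero)

lemma span_left: "x \<in> lin_span \<phi> A B \<Longrightarrow> (\<And>b. b \<in> B \<Longrightarrow> g * b \<in> lin_span \<phi> A B')
   \<Longrightarrow> g * x \<in> lin_span \<phi> A B'"
proof (induction x rule: span_induct)
  case zero then show ?case by (simp add: span_zero)
next
  case (step c b x)
  have "g * (\<phi> c * b + x) = \<phi> c * (g * b) + g * x"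
    using step central[of c g] by (simp add: distrib_left mult.assoc[symmetric])
  then show ?case using step by (auto intro!: span_add span_scal)
qed

lemma span_right: "x \<in> lin_span \<phi> A B \<Longrightarrow> (\<And>b. b \<in> B \<Longrightarrow> b * g \<in> lin_span \<phi> A B')
   \<Longrightarrow> x * g \<in> lin_span \<phi> A B'"
proof (induction x rule: span_induct)
  case zero then show ?case by (simp add: span_zero)
next
  case (step c b x)
  have "(\<phi> c * b + x) * g = \<phi> c * (b * g) + x * g"
    by (simp add: distrib_right mult.assoc)
  then show ?case using step by (auto intro!: span_add span_scal)
qed

end



lemma zpow_0[simp]: "zpow t ti 0 = 1" by (simp add: zpow_def)

context HH begin

definition Si :: "nat \<Rightarrow> 'r" where "Si i = s i - fa"

lemma s_Si: "1 \<le> i \<Longrightarrow> i \<le> n - 1 \<Longrightarrow> s i * Si i = 1"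
  unfolding Si_def using quad[of i, folded aa_def fa_def] by (simp add: right_diff_distrib fa_central)
lemma Si_s: "1 \<le> i \<Longrightarrow> i \<le> n - 1 \<Longrightarrow> Si i * s i = 1"
  unfolding Si_def using quad[of i, folded aa_def fa_def] by (simp add: left_diff_distrib)

lemma ring_inv_s: "1 \<le> i \<Longrightarrow> i \<le> n - 1 \<Longrightarrow> ring_inv (s i) = Si i"
  unfolding ring_inv_def
proof (rule the_equality)
  assume i: "1 \<le> i" "i \<le> n - 1"
  show "s i * Si i = 1 \<and> Si i * s i = 1" using s_Si[OF i] Si_s[OF i] by simp
  fix y assume "s i * y = 1 \<and> y * s i = 1"
  then have "Si i * (s i * y) = Si i" by simp
  then show "y = Si i" using Si_s[OF i] by (simp add: mult.assoc[symmetric])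
qed

lemma comm_Si: "y * s i = s i * y \<Longrightarrow> y * Si i = Si i * y"
  unfolding Si_def by (simp add: right_diff_distrib left_diff_distrib fa_central)

abbreviation P :: "nat list \<Rightarrow> 'r" where "P xs \<equiv> prod_list (map s xs)"
abbreviation Pi :: "nat list \<Rightarrow> 'r" where "Pi xs \<equiv> prod_list (map Si (rev xs))"

lemma P_Pi: "\<forall>i\<in>set xs. 1 \<le> i \<and> i \<le> n - 1 \<Longrightarrow> P xs * Pi xs = 1 \<and> Pi xs * P xs = 1"
proof (induction xs)
  case Nil then show ?case by simp
next
  case (Cons x xs)
  then have IH: "P xs * Pi xs = 1" "Pi xs * P xs = 1" and x: "1 \<le> x" "x \<le> n - 1" by auto
  have "P (x#xs) * Pi (x#xs) = s x * (P xs * Pi xs) * Si x" by (simp add: mult.assoc)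
  also have "\<dots> = 1" using IH s_Si[OF x] by simp
  finally have 1: "P (x#xs) * Pi (x#xs) = 1" .
  have "Pi (x#xs) * P (x#xs) = Pi xs * (Si x * s x) * P xs" by (simp add: mult.assoc)
  also have "\<dots> = 1" using IH Si_s[OF x] by simp
  finally show ?case using 1 by simp
qed

lemma comm_P: "\<forall>j\<in>set xs. y * s j = s j * y \<Longrightarrow> y * P xs = P xs * y"
proof (induction xs)
  case Nil then show ?case by simp
next
  case (Cons x xs)
  have h: "y * s x = s x * y" and IH: "y * P xs = P xs * y" using Cons by auto
  have "y * P (x#xs) = (y * s x) * P xs" by (simp add: mult.assoc)
  also have "\<dots> = s x * (y * P xs)" using h by (simp add: mult.assoc)
  also have "\<dots> = P (x#xs) * y" using IH by (simp add: mult.assoc)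
  finally show ?case .
qed

lemma comm_Pi: "\<forall>j\<in>set xs. y * s j = s j * y \<Longrightarrow> y * Pi xs = Pi xs * y"
proof (induction xs)
  case Nil then show ?case by simp
next
  case (Cons x xs)
  have c: "y * Si x = Si x * y" using Cons(2) comm_Si by simp
  have "y * Pi (x#xs) = (y * Pi xs) * Si x" by (simp add: mult.assoc)
  also have "\<dots> = Pi xs * (y * Si x)" using Cons by (simp add: mult.assoc)
  also have "\<dots> = Pi (x#xs) * y" using c by (simp add: mult.assoc)
  finally show ?case .
qed

abbreviation Z :: "int \<Rightarrow> 'r" where "Z a \<equiv> zpow t ti a"

lemma Z_succ: "Z (a + 1) = t * Z a"
proof (cases "a \<ge> 0")
  case True
  then have "nat (a+1) = Suc (nat a)" by simp
  then show ?thesis using True by (simp add: zpow_def)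
next
  case False
  then have "nat (- a) = Suc (nat (- (a + 1)))" by simp
  then show ?thesis using False tti by (simp add: zpow_def mult.assoc[symmetric])
qed

lemma Z_pred: "Z (a - 1) = ti * Z a"
  using Z_succ[of "a - 1"] tti by (simp add: mult.assoc[symmetric])

lemma comm_Z: "y * t = t * y \<Longrightarrow> y * ti = ti * y \<Longrightarrow> y * Z a = Z a * y"
  unfolding zpow_def
  by (cases "a \<ge> 0") (simp_all add: power_commuting_commutes)

lemma Z_succ': "Z (a + 1) = Z a * t"
  using Z_succ comm_Z[of t a] tti by (metis mult.assoc mult_1_left mult_1_right)

lemma Z_pred': "Z (a - 1) = Z a * ti"
proof -
  have "ti * t = t * ti" using tti by simp
  then have "ti * Z a = Z a * ti" using comm_Z[of ti a] tti by simp
  then show ?thesis using Z_pred by simp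
qed

lemma t_comm_ti: "y * t = t * y \<Longrightarrow> y * ti = ti * y"
proof -
  assume h: "y * t = t * y"
  have "ti * (y * t) * ti = ti * (t * y) * ti" using h by simp
  then show ?thesis using tti by (simp add: mult.assoc[symmetric]) (simp add: mult.assoc)
qed

end



context HH begin

abbreviation D :: "nat \<Rightarrow> 'r" where "D k \<equiv> P [k..<n]"
abbreviation c :: 'r where "c \<equiv> P [1..<n]"
abbreviation ci :: 'r where "ci \<equiv> Pi [1..<n]"
abbreviation d :: 'r where "d \<equiv> P [2..<n]"
abbreviation di :: 'r where "di \<equiv> Pi [2..<n]"
abbreviation cpi :: 'r where "cpi \<equiv> Pi [1..<n-1]"
definition M :: "int \<Rightarrow> 'r" where "M a = ci * Z a * c"

lemma rng: "1 \<le> a \<Longrightarrow> b \<le> n \<Longrightarrow> \<forall>i\<in>set [a..<b]. 1 \<le> i \<and> i \<le> n - 1"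
  by auto

lemma PPi: "1 \<le> a \<Longrightarrow> b \<le> n \<Longrightarrow> P [a..<b] * Pi [a..<b] = 1"
   "1 \<le> a \<Longrightarrow> b \<le> n \<Longrightarrow> Pi [a..<b] * P [a..<b] = 1"
  using P_Pi[OF rng] by blast+

lemma c_ci: "c * ci = 1" "ci * c = 1"
  using PPi[of 1 n] by auto

lemma shift:
  assumes k: "1 \<le> k" "k < i" "i \<le> n - 1"
  shows "s i * D k = D k * s (i - 1)"
proof -
  let ?L1 = "[k..<i-1]" and ?L3 = "[i+1..<n]"
  have "[k..<n] = ?L1 @ [i-1..<n]" using upt_add_eq_append[of k "i-1" "n-(i-1)"] k by simp
  also have "[i-1..<n] = (i-1) # i # ?L3" using k
    by (subst upt_conv_Cons, simp, subst upt_conv_Cons, auto)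
  finally have L: "[k..<n] = ?L1 @ (i-1) # i # ?L3" .
  have c1: "s i * P ?L1 = P ?L1 * s i"
    by (rule comm_P) (use k in \<open>auto intro!: farcomm\<close>)
  have c3: "s (i-1) * P ?L3 = P ?L3 * s (i-1)"
    by (rule comm_P) (use k in \<open>auto intro!: farcomm\<close>)
  have br: "s (i-1) * s i * s (i-1) = s i * s (i-1) * s i"
    using braid[of "i-1"] k by simp
  have "s i * D k = (s i * P ?L1) * s (i-1) * s i * P ?L3"
    unfolding L by (simp add: mult.assoc)
  also have "\<dots> = P ?L1 * (s i * s (i-1) * s i) * P ?L3"
    unfolding c1 by (simp add: mult.assoc)
  also have "\<dots> = P ?L1 * s (i-1) * s i * (s (i-1) * P ?L3)"
    unfolding br[symmetric] by (simp add: mult.assoc)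
  also have "\<dots> = D k * s (i - 1)"
    unfolding c3 L by (simp add: mult.assoc)
  finally show ?thesis .
qed

lemma sucmap: "\<forall>x\<in>set xs. 1 \<le> x \<and> x \<le> n - 2 \<Longrightarrow> P (map Suc xs) * c = c * P xs"
proof (induction xs)
  case Nil then show ?case by simp
next
  case (Cons x xs)
  then have IH: "P (map Suc xs) * c = c * P xs" and x: "1 \<le> x" "x \<le> n - 2" by auto
  have sh: "s (Suc x) * c = c * s x" using shift[of 1 "Suc x"] x by simp
  have "P (map Suc (x#xs)) * c = s (Suc x) * (P (map Suc xs) * c)" by (simp add: mult.assoc)
  also have "\<dots> = (s (Suc x) * c) * P xs" using IH by (simp add: mult.assoc)
  also have "\<dots> = c * P (x#xs)" using sh by (simp add: mult.assoc)
  finally show ?case .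
qed

lemma Dk_c: "2 \<le> k \<Longrightarrow> k \<le> n \<Longrightarrow> D k * c = c * P [k-1..<n-1]"
proof -
  assume k: "2 \<le> k" "k \<le> n"
  have e: "[k..<n] = map Suc [k-1..<n-1]" using k by (simp add: map_Suc_upt)
  have "\<forall>x\<in>set [k-1..<n-1]. 1 \<le> x \<and> x \<le> n - 2" using k by auto
  from sucmap[OF this] show ?thesis unfolding e .
qed

lemma di_c: "2 \<le> n \<Longrightarrow> di * c = c * cpi"
proof -
  assume n2: "2 \<le> n"
  have dc: "d * c = c * P [1..<n-1]" using Dk_c[of 2] n2 by simp
  have i1: "di * d = 1" using PPi[of 2 n] by simp
  have i2: "P [1..<n-1] * cpi = 1" using PPi[of 1 "n-1"] by simp
  have "di * (d * c) * cpi = (di * d) * c * cpi" by (simp add: mult.assoc)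
  also have "\<dots> = c * cpi" using i1 by simp
  finally have 1: "di * (d * c) * cpi = c * cpi" .
  have "di * (d * c) * cpi = di * c * (P [1..<n-1] * cpi)" using dc by (simp add: mult.assoc)
  also have "\<dots> = di * c" using i2 by simp
  finally show ?thesis using 1 by simp
qed

lemma s_M: "1 \<le> i \<Longrightarrow> i \<le> n - 2 \<Longrightarrow> s i * M a = M a * s i"
proof -
  assume i: "1 \<le> i" "i \<le> n - 2"
  have sh: "s (Suc i) * c = c * s i" using shift[of 1 "Suc i"] i by simp
  have "ci * (s (Suc i) * c) * ci = ci * (c * s i) * ci" using sh by simp
  moreover have "ci * (s (Suc i) * c) * ci = ci * s (Suc i) * (c * ci)" by (simp add: mult.assoc)
  moreover have "ci * (c * s i) * ci = (ci * c) * s i * ci" by (simp add: mult.assoc)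
  ultimately have sh2: "ci * s (Suc i) = s i * ci" using c_ci by simp
  have tc: "t * s (Suc i) = s (Suc i) * t" using ts[of "Suc i"] i by simp
  have zc: "s (Suc i) * Z a = Z a * s (Suc i)"
    by (rule comm_Z) (use tc t_comm_ti[of "s (Suc i)"] in auto)
  have "s i * M a = (s i * ci) * Z a * c" by (simp add: M_def mult.assoc)
  also have "\<dots> = ci * (s (Suc i) * Z a) * c" unfolding sh2[symmetric] by (simp add: mult.assoc)
  also have "\<dots> = ci * Z a * (s (Suc i) * c)" using zc by (simp add: mult.assoc)
  also have "\<dots> = M a * s i" using sh by (simp add: M_def mult.assoc)
  finally show ?thesis .
qed

lemma Zc: "Z b * c = c * M b"
proof -
  have "c * M b = (c * ci) * Z b * c" unfolding M_def by (simp add: mult.assoc)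
  then show ?thesis using c_ci by simp
qed

lemma M0: "M 0 = 1" unfolding M_def using c_ci by simp

lemma t_d: "t * d = d * t" "t * di = di * t"
  by (rule comm_P, use ts in auto) (rule comm_Pi, use ts in auto)

lemma c_split: "2 \<le> n \<Longrightarrow> c = s 1 * d \<and> ci = di * Si 1"
proof -
  assume "2 \<le> n"
  then have "[1..<n] = 1 # [Suc 1..<n]" by (simp add: upt_conv_Cons del: upt_Suc)
  then have "[1..<n] = 1 # [2..<n]" by (simp add: numeral_2_eq_2)
  then show ?thesis by simp
qed

end



context HH begin

lemma s1_eq: "s 1 = Si 1 + fa" unfolding Si_def by simp

lemma coreC: assumes n2: "2 \<le> n"
  shows "Si 1 * Z a * s 1 * t = t * s 1 * Z a * Si 1"
proof -
  let ?Y = "s 1 * t * s 1"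
  have Yt: "?Y * t = t * ?Y" using tst[OF n2] by (simp add: mult.assoc)
  have Yti: "?Y * ti = ti * ?Y" using t_comm_ti[OF Yt] .
  have ZY: "?Y * Z a = Z a * ?Y" using comm_Z[OF Yt Yti] .
  have s11: "s 1 * Si 1 = 1" "Si 1 * s 1 = 1" using s_Si[of 1] Si_s[of 1] n2 by auto
  have "Si 1 * (Z a * ?Y) * Si 1 = Si 1 * (?Y * Z a) * Si 1" using ZY by simp
  moreover have "Si 1 * (Z a * ?Y) * Si 1 = Si 1 * Z a * s 1 * t * (s 1 * Si 1)" by (simp add: mult.assoc)
  moreover have "Si 1 * (?Y * Z a) * Si 1 = (Si 1 * s 1) * t * s 1 * Z a * Si 1" by (simp add: mult.assoc)
  ultimately show ?thesis using s11 by simp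
qed

lemma coreI1: assumes n2: "2 \<le> n"
  shows "t * Si 1 * Z a * s 1 = fa * (t * s 1 * Z a) + Si 1 * Z a * s 1 * t - fa * (Z (a+1) * s 1)"
proof -
  have C: "Si 1 * Z a * s 1 * t = t * s 1 * Z a * Si 1" using coreC[OF n2] .
  have "t * Si 1 * Z a * s 1 = t * s 1 * Z a * s 1 - fa * (Z (a+1) * s 1)"
    unfolding Si_def Z_succ by (simp add: algebra_simps fa_central)
  also have "t * s 1 * Z a * s 1 = t * s 1 * Z a * Si 1 + fa * (t * s 1 * Z a)"
    unfolding Si_def by (simp add: algebra_simps fa_central)
  finally show ?thesis unfolding C[symmetric] by (simp add: algebra_simps)
qed

lemma coreI2: assumes n2: "2 \<le> n"
  shows "ti * Si 1 * Z a * s 1 = Si 1 * Z a * s 1 * ti + fa * (Z a * s 1 * ti) - fa * (s 1 * Z (a - 1))"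
proof -
  have C: "Si 1 * Z a * s 1 * t = t * s 1 * Z a * Si 1" using coreC[OF n2] .
  have "ti * (Si 1 * Z a * s 1 * t) * ti = ti * (t * s 1 * Z a * Si 1) * ti" using C by simp
  moreover have "ti * (Si 1 * Z a * s 1 * t) * ti = ti * Si 1 * Z a * s 1 * (t * ti)" by (simp add: mult.assoc)
  moreover have "ti * (t * s 1 * Z a * Si 1) * ti = (ti * t) * s 1 * Z a * Si 1 * ti" by (simp add: mult.assoc)
  ultimately have C2: "ti * Si 1 * Z a * s 1 = s 1 * Z a * Si 1 * ti" using tti by simp
  have "s 1 * Z a * Si 1 * ti = s 1 * Z a * s 1 * ti - fa * (s 1 * Z (a - 1))"
    unfolding Si_def Z_pred' by (simp add: algebra_simps fa_central)
  also have "s 1 * Z a * s 1 * ti = Si 1 * Z a * s 1 * ti + fa * (Z a * s 1 * ti)"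
    unfolding Si_def by (simp add: algebra_simps fa_central)
  finally show ?thesis unfolding C2 by (simp add: algebra_simps)
qed

end



context HH begin

lemma dZ: "d * Z a = Z a * d" "di * Z a = Z a * di"
proof -
  have a: "d * t = t * d" "di * t = t * di" using t_d by simp_all
  show "d * Z a = Z a * d" using comm_Z[OF a(1) t_comm_ti[OF a(1)]] .
  show "di * Z a = Z a * di" using comm_Z[OF a(2) t_comm_ti[OF a(2)]] .
qed

lemma tid: "ti * d = d * ti" "ti * di = di * ti"
  using t_comm_ti[of d] t_comm_ti[of di] t_d by simp_all

lemma Z1: "Z 1 = t" by (simp add: zpow_def)

lemma dsd: "2 \<le> n \<Longrightarrow> di * s 1 * d = c * cpi"
  using c_split di_c by (simp add: mult.assoc)

lemma Zc': "Z b * (c * X) = c * (M b * X)"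
  using Zc[of b] by (metis mult.assoc)

lemma M_split: "2 \<le> n \<Longrightarrow> M a = di * (Si 1 * Z a * s 1) * d"
  using c_split unfolding M_def by (simp add: mult.assoc)

lemma tM: assumes n2: "2 \<le> n"
  shows "t * M a = fa * (c * M 1 * (cpi * Z a)) + M a * t - fa * (c * M (a+1) * cpi)"
proof -
  have "t * M a = di * (t * Si 1 * Z a * s 1) * d"
    unfolding M_split[OF n2] by (simp add: mult.assoc[symmetric] t_d)
  also have "\<dots> = di * (fa * (t * s 1 * Z a) + Si 1 * Z a * s 1 * t - fa * (Z (a+1) * s 1)) * d"
    unfolding coreI1[OF n2] ..
  also have "\<dots> = fa * (di * t * s 1 * Z a * d) + di * (Si 1 * Z a * s 1) * t * d
                   - fa * (di * Z (a+1) * s 1 * d)"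
    by (simp add: algebra_simps fa_central)
  also have "di * t * s 1 * Z a * d = t * (di * s 1 * d) * Z a"
  proof -
    have e1: "di * t = t * di" using t_d(2) by simp
    have "di * t * s 1 * Z a * d = t * di * s 1 * (Z a * d)" by (simp only: e1) (simp add: mult.assoc)
    also have "\<dots> = t * di * s 1 * (d * Z a)" using dZ(1) by simp
    finally show ?thesis by (simp add: mult.assoc)
  qed
  also have "di * (Si 1 * Z a * s 1) * t * d = M a * t"
    unfolding M_split[OF n2] by (simp add: mult.assoc t_d)
  also have "di * Z (a+1) * s 1 * d = Z (a+1) * (di * s 1 * d)"
    by (simp add: mult.assoc dZ)
  finally show ?thesis
    unfolding dsd[OF n2] using Z1
    by (simp only: mult.assoc Zc'[of 1, unfolded Z1] Zc')
qed

lemma tiM: assumes n2: "2 \<le> n"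
  shows "ti * M a = M a * ti + fa * (c * M a * (cpi * ti)) - fa * (c * M 0 * (cpi * Z (a - 1)))"
proof -
  have "ti * M a = di * (ti * Si 1 * Z a * s 1) * d"
    unfolding M_split[OF n2] by (simp add: mult.assoc[symmetric] tid)
  also have "\<dots> = di * (Si 1 * Z a * s 1 * ti + fa * (Z a * s 1 * ti) - fa * (s 1 * Z (a - 1))) * d"
    unfolding coreI2[OF n2] ..
  also have "\<dots> = di * (Si 1 * Z a * s 1) * ti * d + fa * (di * Z a * s 1 * ti * d)
                   - fa * (di * s 1 * Z (a - 1) * d)"
    by (simp add: algebra_simps fa_central)
  also have "di * (Si 1 * Z a * s 1) * ti * d = M a * ti"
    unfolding M_split[OF n2] by (simp add: mult.assoc tid)
  also have "di * Z a * s 1 * ti * d = Z a * (di * s 1 * d) * ti"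
    by (simp add: mult.assoc tid) (simp add: mult.assoc[symmetric] dZ)
  also have "di * s 1 * Z (a - 1) * d = (di * s 1 * d) * Z (a - 1)"
    by (simp add: mult.assoc dZ)
  finally show ?thesis
    unfolding dsd[OF n2]
    by (simp only: mult.assoc Zc' M0 mult_1_left)
qed

end



context HH begin

definition Wt :: "'r set" where "Wt = alg_gen \<phi> A ({t, ti} \<union> s ` {1..<n-1})"
definition Ball :: "'r set" where
  "Ball = {D k * M a * w | k a w. 1 \<le> k \<and> k \<le> n \<and> w \<in> Wt}"
abbreviation V :: "'r set" where "V \<equiv> lin_span \<phi> A Ball"

lemma Wt_t: "t \<in> Wt" "ti \<in> Wt" unfolding Wt_def by (auto intro: alg_gen.gen)
lemma Wt_s: "1 \<le> i \<Longrightarrow> i \<le> n - 2 \<Longrightarrow> s i \<in> Wt" unfolding Wt_def by (auto intro: alg_gen.gen)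
lemma Wt_one: "1 \<in> Wt" unfolding Wt_def using alg_gen.scal[OF coeffA_one] phi_one by metis
lemma Wt_mult: "x \<in> Wt \<Longrightarrow> y \<in> Wt \<Longrightarrow> x * y \<in> Wt" unfolding Wt_def by (rule alg_gen.mult)
lemma Wt_Si: "1 \<le> i \<Longrightarrow> i \<le> n - 2 \<Longrightarrow> Si i \<in> Wt"
proof -
  assume i: "1 \<le> i" "i \<le> n - 2"
  have "Si i = s i + \<phi> (- aa)" unfolding Si_def fa_def using phi_uminus[OF aa_A] by simp
  then show ?thesis using Wt_s[OF i] alg_gen.scal[OF coeffA_uminus[OF aa_A]] alg_gen.add
    unfolding Wt_def by metis
qed
lemma Wt_P: "\<forall>i\<in>set xs. 1 \<le> i \<and> i \<le> n - 2 \<Longrightarrow> P xs \<in> Wt"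
  by (induction xs) (simp_all add: Wt_mult Wt_s Wt_one)
lemma Wt_Pi: "\<forall>i\<in>set xs. 1 \<le> i \<and> i \<le> n - 2 \<Longrightarrow> Pi xs \<in> Wt"
  by (induction xs) (simp_all add: Wt_mult Wt_Si Wt_one)
lemma Wt_Z: "Z a \<in> Wt"
proof -
  have "\<And>k. t ^ k \<in> Wt" "\<And>k. ti ^ k \<in> Wt"
    by (induct_tac k, auto intro: Wt_mult Wt_one Wt_t)+
  then show ?thesis unfolding zpow_def by simp
qed
lemma Wt_cpi: "cpi \<in> Wt" by (rule Wt_Pi) auto

lemma bI: "1 \<le> k \<Longrightarrow> k \<le> n \<Longrightarrow> w \<in> Wt \<Longrightarrow> D k * M a * w \<in> V"
  by (rule span_single) (auto simp: Ball_def)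

lemma V_right: assumes x: "x \<in> V" and w: "w \<in> Wt" shows "x * w \<in> V"
proof (rule span_right[OF x])
  fix b assume "b \<in> Ball"
  then obtain k a w' where b: "b = D k * M a * w'" "1 \<le> k" "k \<le> n" "w' \<in> Wt"
    unfolding Ball_def by blast
  then show "b * w \<in> V" using bI[of k "w' * w" a] Wt_mult w by (simp add: mult.assoc)
qed

lemma V_left: assumes h: "\<And>k a. 1 \<le> k \<Longrightarrow> k \<le> n \<Longrightarrow> g * (D k * M a) \<in> V" and x: "x \<in> V"
  shows "g * x \<in> V"
proof (rule span_left[OF x])
  fix b assume "b \<in> Ball"
  then obtain k a w' where b: "b = D k * M a * w'" "1 \<le> k" "k \<le> n" "w' \<in> Wt"
    unfolding Ball_def by blast
  then show "g * b \<in> V" using V_right[OF h[OF b(2,3)] b(4)] by (simp add: mult.assoc)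
qed

lemma cM: "w \<in> Wt \<Longrightarrow> c * M a * w \<in> V"
  using bI[of 1 w a] n1 by simp

lemma DcM: "2 \<le> k \<Longrightarrow> k \<le> n \<Longrightarrow> w \<in> Wt \<Longrightarrow> D k * (c * M b * w) \<in> V"
proof -
  assume k: "2 \<le> k" "k \<le> n" and w: "w \<in> Wt"
  have cm: "M b * P [k-1..<n-1] = P [k-1..<n-1] * M b"
    by (rule comm_P) (use k s_M in auto)
  have "D k * (c * M b * w) = c * (P [k-1..<n-1] * M b) * w"
    using Dk_c[OF k] by (simp add: mult.assoc[symmetric])
  also have "\<dots> = c * M b * (P [k-1..<n-1] * w)" unfolding cm[symmetric] by (simp add: mult.assoc)
  moreover have wp: "P [k-1..<n-1] * w \<in> Wt" by (rule Wt_mult[OF Wt_P w]) (use k in auto)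
  ultimately show ?thesis using cM[OF wp, of b] by simp
qed

lemma fa_in: "fa * x = \<phi> aa * x" unfolding fa_def ..

lemma V_fa: "x \<in> V \<Longrightarrow> fa * x \<in> V" by (rule span_fa)

lemma D_fa: "D k * (fa * X) = fa * (D k * X)"
proof -
  have "D k * (fa * X) = (D k * fa) * X" by (simp add: mult.assoc)
  also have "\<dots> = (fa * D k) * X" using fa_central[of "D k"] by simp
  finally show ?thesis by (simp add: mult.assoc)
qed

lemma comm2: fixes x y z :: 'r assumes "x * y = y * x" "x * z = z * x" shows "x * (y * z) = y * z * x"
proof -
  have "x * (y * z) = (x * y) * z" by (simp add: mult.assoc)
  also have "\<dots> = y * (x * z)" using assms(1) by (simp add: mult.assoc)
  also have "\<dots> = y * z * x" using assms(2) by (simp add: mult.assoc)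
  finally show ?thesis .
qed

lemma gen_s: assumes i: "1 \<le> i" "i \<le> n - 1" and k: "1 \<le> k" "k \<le> n"
  shows "s i * (D k * M a) \<in> V"
proof -
  consider "i + 1 < k" | "i + 1 = k" | "i = k" | "k < i" by linarith
  then show ?thesis
  proof cases
    case 1
    have "s i * D k = D k * s i" by (rule comm_P) (use i k 1 in \<open>auto intro!: farcomm\<close>)
    moreover have "s i * M a = M a * s i" using s_M[of i a] i k 1 by simp
    ultimately have "s i * (D k * M a) = D k * M a * s i" by (rule comm2)
    moreover have "D k * M a * s i \<in> V" by (rule bI[OF k Wt_s]) (use i k 1 in auto)
    ultimately show ?thesis by simp
  next
    case 2
    have "[i..<n] = i # [k..<n]" using 2 k by (simp add: upt_conv_Cons)
    then have "s i * D k = D i" by simp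
    then have "s i * (D k * M a) = D i * M a * 1" by (simp add: mult.assoc[symmetric])
    then show ?thesis using bI[OF _ _ Wt_one, of i a] i k 2 by simp
  next
    case 3
    have "[k..<n] = k # [k+1..<n]" using 3 i k by (simp add: upt_conv_Cons)
    then have Dk: "D k = s k * D (k+1)" by simp
    have "s i * (D k * M a) = (s k * s k) * D (k+1) * M a" using 3 Dk by (simp add: mult.assoc)
    also have "\<dots> = fa * (D k * M a * 1) + D (k+1) * M a * 1"
      using quad[of k, folded aa_def fa_def] 3 i Dk by (simp add: algebra_simps)
    finally show ?thesis using span_add[OF V_fa[OF bI[OF k Wt_one]] bI[OF _ _ Wt_one]] 3 i k
      by simp
  next
    case 4
    have "s i * D k = D k * s (i - 1)" using shift[of k i] 4 i k by simp
    moreover have "s (i-1) * M a = M a * s (i-1)" using s_M[of "i-1" a] i 4 k by simp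
    ultimately have "s i * (D k * M a) = D k * M a * s (i - 1)"
      by (simp add: mult.assoc[symmetric]) (simp add: mult.assoc)
    moreover have "D k * M a * s (i - 1) \<in> V" by (rule bI[OF k Wt_s]) (use i k 4 in auto)
    ultimately show ?thesis by simp
  qed
qed

lemma gen_t: assumes k: "1 \<le> k" "k \<le> n"
  shows "t * (D k * M a) \<in> V"
proof (cases "k = 1")
  case True
  have "t * (c * M a) = t * (Z a * c)" using Zc by simp
  also have "\<dots> = c * M (a+1) * 1" using Zc[of "a+1"] Z_succ[of a] by (simp add: mult.assoc)
  finally show ?thesis using True cM[OF Wt_one] by simp
next
  case False
  then have k2: "2 \<le> k" and n2: "2 \<le> n" using k by auto
  have tD: "t * D k = D k * t" by (rule comm_P) (use k2 ts in auto)
  have "t * (D k * M a) = D k * (t * M a)" using tD by (simp add: mult.assoc[symmetric])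
  also have "\<dots> = fa * (D k * (c * M 1 * (cpi * Z a))) + D k * M a * t - fa * (D k * (c * M (a+1) * cpi))"
    unfolding tM[OF n2] by (simp add: right_diff_distrib distrib_left D_fa mult.assoc)
  finally have e: "t * (D k * M a) = fa * (D k * (c * M 1 * (cpi * Z a))) + D k * M a * t - fa * (D k * (c * M (a+1) * cpi))" .
  have 1: "D k * (c * M 1 * (cpi * Z a)) \<in> V" by (rule DcM[OF k2 k(2) Wt_mult[OF Wt_cpi Wt_Z]])
  have 2: "D k * M a * t \<in> V" by (rule bI[OF k Wt_t(1)])
  have 3: "D k * (c * M (a+1) * cpi) \<in> V" by (rule DcM[OF k2 k(2) Wt_cpi])
  show ?thesis unfolding e by (intro span_diff span_add V_fa 1 2 3)
qed

lemma gen_ti: assumes k: "1 \<le> k" "k \<le> n"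
  shows "ti * (D k * M a) \<in> V"
proof (cases "k = 1")
  case True
  have "ti * (c * M a) = ti * (Z a * c)" using Zc by simp
  also have "\<dots> = c * M (a-1) * 1" using Zc[of "a-1"] Z_pred[of a] by (simp add: mult.assoc)
  finally show ?thesis using True cM[OF Wt_one] by simp
next
  case False
  then have k2: "2 \<le> k" and n2: "2 \<le> n" using k by auto
  have tD: "ti * D k = D k * ti" by (rule comm_P) (use k2 ts t_comm_ti in auto)
  have "ti * (D k * M a) = D k * (ti * M a)" using tD by (simp add: mult.assoc[symmetric])
  also have "\<dots> = D k * M a * ti + fa * (D k * (c * M a * (cpi * ti))) - fa * (D k * (c * M 0 * (cpi * Z (a - 1))))"
    unfolding tiM[OF n2] by (simp add: right_diff_distrib distrib_left D_fa mult.assoc)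
  finally have e: "ti * (D k * M a) = D k * M a * ti + fa * (D k * (c * M a * (cpi * ti))) - fa * (D k * (c * M 0 * (cpi * Z (a - 1))))" .
  have 1: "D k * (c * M a * (cpi * ti)) \<in> V" by (rule DcM[OF k2 k(2) Wt_mult[OF Wt_cpi Wt_t(2)]])
  have 2: "D k * M a * ti \<in> V" by (rule bI[OF k Wt_t(2)])
  have 3: "D k * (c * M 0 * (cpi * Z (a - 1))) \<in> V" by (rule DcM[OF k2 k(2) Wt_mult[OF Wt_cpi Wt_Z]])
  show ?thesis unfolding e by (intro span_diff span_add V_fa 1 2 3)
qed

lemma V_all: "x \<in> V"
proof -
  have "\<forall>x\<in>V. y * x \<in> V" if "y \<in> alg_gen \<phi> A ({t, ti} \<union> s ` {1..<n})" for y
    using that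
  proof (induction y rule: alg_gen.induct)
    case (scal a) then show ?case using span_scal by blast
  next
    case (gen g)
    show ?case
    proof (intro ballI)
      fix x assume x: "x \<in> V"
      from gen consider "g = t" | "g = ti" | i where "g = s i" "1 \<le> i" "i < n" by auto
      then show "g * x \<in> V"
      proof cases
        case 1 then show ?thesis using V_left[OF gen_t x] by simp
      next
        case 2 then show ?thesis using V_left[OF gen_ti x] by simp
      next
        case 3 then show ?thesis using V_left[OF gen_s x, of i] by simp
      qed
    qed
  next
    case (add x y) then show ?case by (simp add: distrib_right span_add)
  next
    case (mult x y) then show ?case by (simp add: mult.assoc)
  qed
  moreover have "1 \<in> V" using bI[OF n1 order.refl Wt_one, of 0] M0 by simp
  moreover have "x \<in> alg_gen \<phi> A ({t, ti} \<union> s ` {1..<n})" using genall by simp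
  ultimately have "x * 1 \<in> V" by blast
  then show ?thesis by simp
qed

end



context HH begin

definition Ek :: "nat \<Rightarrow> 'r set" where "Ek k = lin_span \<phi> A {t ^ j | j. j < k}"

lemma Ek_single: "j < k \<Longrightarrow> t ^ j \<in> Ek k"
  unfolding Ek_def by (rule span_single) blast

lemma Ek_mono: "x \<in> Ek k \<Longrightarrow> k \<le> k' \<Longrightarrow> x \<in> Ek k'"
  using Ek_single unfolding Ek_def by (erule_tac span_trans) auto

lemma Ek_t: "x \<in> Ek k \<Longrightarrow> t * x \<in> Ek (Suc k)"
  using Ek_single unfolding Ek_def by (erule_tac span_left) (auto simp flip: power_Suc)

lemma prodA: "\<forall>a\<in>set l. a \<in> A \<Longrightarrow> prod_list (map uminus l) \<in> A"
  by (induction l) (auto intro: coeffA_mult coeffA_uminus coeffA_one)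

lemma monic: "\<forall>a\<in>set l. a \<in> A \<Longrightarrow>
  \<exists>y\<in>Ek (length l). prod_list (map (\<lambda>a. t - \<phi> a) l) = t ^ length l + y"
proof (induction l)
  case Nil then show ?case using span_zero by (auto simp: Ek_def)
next
  case (Cons a l)
  then obtain y where y: "y \<in> Ek (length l)" "prod_list (map (\<lambda>a. t - \<phi> a) l) = t ^ length l + y"
    and a: "a \<in> A" by auto
  let ?k = "length l"
  have "prod_list (map (\<lambda>a. t - \<phi> a) (a#l)) = t ^ Suc ?k + (t * y - \<phi> a * t ^ ?k - \<phi> a * y)"
    using y(2) central[OF a, of t] by (simp add: algebra_simps)
  moreover have "t * y - \<phi> a * t ^ ?k - \<phi> a * y \<in> Ek (Suc ?k)"
    using Ek_t[OF y(1)] Ek_single[of ?k "Suc ?k"] Ek_mono[OF y(1), of "Suc ?k"] a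
    unfolding Ek_def by (auto intro!: span_diff span_scal)
  ultimately show ?case by auto
qed

lemma constt: "\<forall>a\<in>set l. a \<in> A \<Longrightarrow>
  \<exists>z\<in>Ek (length l). prod_list (map (\<lambda>a. t - \<phi> a) l) = \<phi> (prod_list (map uminus l)) + t * z"
proof (induction l)
  case Nil show ?case by (rule bexI[of _ 0]) (auto simp: Ek_def phi_one span_zero)
next
  case (Cons a l)
  then obtain z where z: "z \<in> Ek (length l)" "prod_list (map (\<lambda>a. t - \<phi> a) l) = \<phi> (prod_list (map uminus l)) + t * z"
    and a: "a \<in> A" and l: "\<forall>a\<in>set l. a \<in> A" by auto
  let ?k = "length l" and ?c = "prod_list (map uminus l)"
  have cA: "?c \<in> A" using prodA[OF l] .
  have e: "\<phi> (prod_list (map uminus (a#l))) = - (\<phi> a * \<phi> ?c)"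
    using phi_mult[OF coeffA_uminus[OF a] cA] phi_uminus[OF a] by simp
  have "prod_list (map (\<lambda>a. t - \<phi> a) (a#l)) = \<phi> (prod_list (map uminus (a#l))) + t * (\<phi> ?c * t ^ 0 + t * z - \<phi> a * z)"
  proof -
    have tz: "t * (\<phi> a * z) = \<phi> a * (t * z)" by (simp add: mult.assoc[symmetric] central[OF a, of t])
    show ?thesis
      unfolding e using z(2) central[OF a, of t] central[OF cA, of t] by (simp add: algebra_simps tz)
  qed
  moreover have "\<phi> ?c * t ^ 0 + t * z - \<phi> a * z \<in> Ek (Suc ?k)"
  proof -
    have 1: "\<phi> ?c * t ^ 0 \<in> Ek (Suc ?k)"
      using span_scal[OF Ek_single[of 0 "Suc ?k", unfolded Ek_def] cA] unfolding Ek_def by simp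
    have 2: "t * z \<in> Ek (Suc ?k)" by (rule Ek_t[OF z(1)])
    have 3: "\<phi> a * z \<in> Ek (Suc ?k)"
      using span_scal[OF Ek_mono[OF z(1), of "Suc ?k", unfolded Ek_def] a] unfolding Ek_def by simp
    show ?thesis using span_diff[OF span_add[OF 1[unfolded Ek_def] 2[unfolded Ek_def]] 3[unfolded Ek_def]]
      unfolding Ek_def .
  qed
  ultimately show ?case by auto
qed

lemma c0_inv: "prod_list (map uminus (map lvar L)) * prod_list (map uminus (map lvar_inv L)) = 1"
proof (induction L)
  case Nil then show ?case by simp
next
  case (Cons x L)
  let ?P = "prod_list (map uminus (map lvar L))" and ?Q = "prod_list (map uminus (map lvar_inv L))"
  have r: "\<And>a p b q :: laurent. a * p * (b * q) = (a * b) * (p * q)" by (simp add: mult_ac)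
  show ?case using Cons lvar_mult_inv[of x] by (simp add: r)
qed

lemma Zspan: "Z a \<in> lin_span \<phi> A {Z b | b. b \<in> expE m}"
proof (cases "m = \<infinity>")
  case True then show ?thesis by (intro span_single) (auto simp: expE_def)
next
  case False
  then obtain mm where mm: "m = enat mm" by auto
  then have mm1: "mm \<ge> 1" using m0 by (simp add: Suc_le_eq zero_enat_def)
  let ?L = "map lvar [1..<mm+1]"
  have LA: "\<forall>a\<in>set ?L. a \<in> A" using mm by (auto intro!: coeffA_lvar)
  have pe: "prod_list (map (\<lambda>a. t - \<phi> a) ?L) = 0" using polyrel False mm by (simp add: o_def)
  have len: "length ?L = mm" by simp
  obtain y where y: "y \<in> Ek mm" "0 = t ^ mm + y" using monic[OF LA] pe len by auto
  have "t ^ mm = - y" using y(2) by (simp add: eq_neg_iff_add_eq_0)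
  then have tm: "t ^ mm \<in> Ek mm" using span_neg[OF y(1)[unfolded Ek_def]] unfolding Ek_def by simp
  obtain z where z: "z \<in> Ek mm" "0 = \<phi> (prod_list (map uminus ?L)) + t * z"
    using constt[OF LA] pe len by auto
  let ?c = "prod_list (map uminus ?L)" and ?ci = "prod_list (map uminus (map lvar_inv [1..<mm+1]))"
  have ciA: "?ci \<in> A" using mm by (intro prodA) (auto intro!: coeffA_lvar_inv)
  have cA: "?c \<in> A" using prodA[OF LA] .
  have cc: "\<phi> ?c * \<phi> ?ci = 1" using phi_mult[OF cA ciA] c0_inv[of "[1..<mm+1]"] phi_one by simp
  have tz: "t * z = - \<phi> ?c" using z(2) by (simp add: eq_neg_iff_add_eq_0 add.commute)
  have "t * (\<phi> (- ?ci) * z) = 1"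
    using tz cc central[OF coeffA_uminus[OF ciA], of t] phi_uminus[OF ciA] central[OF ciA]
    by (simp add: mult.assoc[symmetric])
  then have "ti * (t * (\<phi> (- ?ci) * z)) = ti" by simp
  then have tiE: "ti \<in> Ek mm" using tti span_scal[OF z(1)[unfolded Ek_def] coeffA_uminus[OF ciA]]
    unfolding Ek_def by (simp add: mult.assoc[symmetric])
  have tE: "x \<in> Ek mm \<Longrightarrow> t * x \<in> Ek mm" for x
    unfolding Ek_def
  proof (erule span_left)
    fix b assume "b \<in> {t ^ j |j. j < mm}"
    then obtain j where j: "b = t ^ j" "j < mm" by auto
    show "t * b \<in> lin_span \<phi> A {t ^ j |j. j < mm}"
    proof (cases "Suc j < mm")
      case True then show ?thesis using j Ek_single[of "Suc j" mm] unfolding Ek_def by simp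
    next
      case False then have sj: "Suc j = mm" using j by simp
      have "t * b = t ^ mm" using j sj by auto
      then show ?thesis using tm unfolding Ek_def by simp
    qed
  qed
  have tiE2: "x \<in> Ek mm \<Longrightarrow> ti * x \<in> Ek mm" for x
    unfolding Ek_def
  proof (erule span_left)
    fix b assume "b \<in> {t ^ j |j. j < mm}"
    then obtain j where j: "b = t ^ j" "j < mm" by auto
    show "ti * b \<in> lin_span \<phi> A {t ^ j |j. j < mm}"
    proof (cases j)
      case 0 then show ?thesis using j tiE unfolding Ek_def by simp
    next
      case (Suc j')
      then have "ti * b = t ^ j'" using j tti by (simp add: mult.assoc[symmetric])
      then show ?thesis using j Suc by (intro span_single) auto
    qed
  qed
  have ZE: "Z a \<in> Ek mm"
  proof (induction a rule: int_induct[where k=0])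
    case base then show ?case using Ek_single[of 0 mm] mm1 by simp
  next
    case (step1 i) then show ?case using tE Z_succ by simp
  next
    case (step2 i) then show ?case using tiE2 Z_pred by simp
  qed
  have "{t ^ j |j. j < mm} \<subseteq> lin_span \<phi> A {Z b | b. b \<in> expE m}"
  proof
    fix x assume "x \<in> {t ^ j |j. j < mm}"
    then obtain j where j: "x = t ^ j" "j < mm" by auto
    then have "x = Z (int j)" by (simp add: zpow_def)
    moreover have "int j \<in> expE m" using j mm by (simp add: expE_def)
    ultimately show "x \<in> lin_span \<phi> A {Z b | b. b \<in> expE m}" by (intro span_single) auto
  qed
  then show ?thesis using ZE unfolding Ek_def by (rule span_trans[rotated])
qed

end



context HH begin

lemma final: "x \<in> lin_span \<phi> (coeffA m)
           {prod_list (map (\<lambda>i. ring_inv (s i)) (rev [1..<j+1])) * zpow t ti \<alpha>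
              * prod_list (map s [1..<n]) * w
            | j \<alpha> w. j < n \<and> \<alpha> \<in> expE m
                 \<and> w \<in> alg_gen \<phi> (coeffA m) ({t, ti} \<union> s ` {1..<n-1})}"
  (is "x \<in> lin_span \<phi> A ?T")
proof -
  have "Ball \<subseteq> lin_span \<phi> A ?T"
  proof
    fix b assume "b \<in> Ball"
    then obtain k a w where b: "b = D k * M a * w" and k: "1 \<le> k" "k \<le> n" and w: "w \<in> Wt"
      unfolding Ball_def by blast
    have split: "[1..<n] = [1..<k] @ [k..<n]" using upt_add_eq_append[of 1 k "n-k"] k by simp
    have "ci = Pi [k..<n] * Pi [1..<k]" unfolding split by simp
    then have Dci: "D k * ci = Pi [1..<k]" using PPi(1)[OF k(1) order.refl] by (simp add: mult.assoc[symmetric])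
    have b2: "b = Pi [1..<k] * (Z a * (c * w))"
      unfolding b M_def Dci[symmetric] by (simp add: mult.assoc)
    have s1: "Z a * (c * w) \<in> lin_span \<phi> A {Z \<beta> * (c * w) | \<beta>. \<beta> \<in> expE m}"
    proof (rule span_right[OF Zspan])
      fix b0 assume "b0 \<in> {Z b |b. b \<in> expE m}"
      then show "b0 * (c * w) \<in> lin_span \<phi> A {Z \<beta> * (c * w) | \<beta>. \<beta> \<in> expE m}"
        by (intro span_single) blast
    qed
    have pe: "prod_list (map (\<lambda>i. ring_inv (s i)) (rev [1..<(k-1)+1])) = Pi [1..<k]"
    proof -
      have e: "(k-1)+1 = k" using k by simp
      have "map (\<lambda>i. ring_inv (s i)) (rev [1..<k]) = map Si (rev [1..<k])"
        using k by (intro map_cong) (auto intro!: ring_inv_s)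
      then show ?thesis unfolding e by (simp only:)
    qed
    show "b \<in> lin_span \<phi> A ?T"
      unfolding b2
    proof (rule span_left[OF s1])
      fix b1 assume "b1 \<in> {Z \<beta> * (c * w) | \<beta>. \<beta> \<in> expE m}"
      then obtain \<beta> where b1: "b1 = Z \<beta> * (c * w)" "\<beta> \<in> expE m" by blast
      have eq: "Pi [1..<k] * b1 = prod_list (map (\<lambda>i. ring_inv (s i)) (rev [1..<(k-1)+1])) * Z \<beta> * c * w"
        unfolding b1 pe by (simp add: mult.assoc)
      have kn: "k - 1 < n" using k by simp
      have "Pi [1..<k] * b1 \<in> ?T"
        unfolding eq using kn b1(2) w unfolding Wt_def by blast
      then show "Pi [1..<k] * b1 \<in> lin_span \<phi> A ?T" by (rule span_single)
    qed
  qed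
  then show ?thesis using V_all span_trans by blast
qed

end

theorem mainTheorem2:
  fixes m :: enat and n :: nat
    and \<phi> :: "laurent \<Rightarrow> 'r::ring_1" and t ti :: 'r and s :: "nat \<Rightarrow> 'r"
  assumes "m > 0" and "n \<ge> 1"
    and "is_H m n \<phi> t ti s"
  shows "\<forall>x. x \<in> lin_span \<phi> (coeffA m)
           {prod_list (map (\<lambda>i. ring_inv (s i)) (rev [1..<j+1])) * zpow t ti \<alpha>
              * prod_list (map s [1..<n]) * w
            | j \<alpha> w. j < n \<and> \<alpha> \<in> expE m
                 \<and> w \<in> alg_gen \<phi> (coeffA m) ({t, ti} \<union> s ` {1..<n-1})}"
  using HH.final[OF HH.intro[OF assms(3,1,2)]] by blast



end
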